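(* Let $p(bc\mid yz)$ be a bipartite conditional probability distribution with binary settings $y,z\in\{0,1\}$ and binary outcomes $b,c\in\{0,1\}$ which is nonsignalling, i.e. $\sum_c p(bc\mid yz)$ does not depend on $z$ and $\sum_b p(bc\mid yz)$ does not depend on $y$. Then $$\frac14\sum_{y,z\in\{0,1\}} p(b\oplus c = yz\mid yz) \;\leq\; \frac54 - \frac12\, p(b=0\mid y=0),$$ where $p(b=0\mid y=0)=\sum_c p(b=0,c\mid y=0,z)$ (independent of $z$ by nonsignalling).
   Context: $\oplus$ denotes addition modulo 2, and $p(b\oplus c = yz\mid yz)=\sum_{b,c:\, b\oplus c = yz} p(bc\mid yz)$. *)

theory Defs
  imports Complex_Main
begin

text \<open>A bipartite conditional probability distribution p(bc|yz) with
binary settings y,z and binary outcomes b,c, all encoded in {0,1} :: nat.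
p b c y z stands for p(bc|yz).\<close>

definition is_cond_prob :: "(nat \<Rightarrow> nat \<Rightarrow> nat \<Rightarrow> nat \<Rightarrow> real) \<Rightarrow> bool" where
  "is_cond_prob p \<longleftrightarrow>
     (\<forall>b\<in>{0,1}. \<forall>c\<in>{0,1}. \<forall>y\<in>{0,1}. \<forall>z\<in>{0,1}. p b c y z \<ge> 0) \<and>
     (\<forall>y\<in>{0,1}. \<forall>z\<in>{0,1}. (\<Sum>b\<in>{0,1}. \<Sum>c\<in>{0,1}. p b c y z) = 1)"

definition nonsignalling :: "(nat \<Rightarrow> nat \<Rightarrow> nat \<Rightarrow> nat \<Rightarrow> real) \<Rightarrow> bool" where
  "nonsignalling p \<longleftrightarrow>
     (\<forall>b\<in>{0,1}. \<forall>y\<in>{0,1}. \<forall>z\<in>{0,1}. \<forall>z'\<in>{0,1}.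
        (\<Sum>c\<in>{0,1}. p b c y z) = (\<Sum>c\<in>{0,1}. p b c y z')) \<and>
     (\<forall>c\<in>{0,1}. \<forall>z\<in>{0,1}. \<forall>y\<in>{0,1}. \<forall>y'\<in>{0,1}.
        (\<Sum>b\<in>{0,1}. p b c y z) = (\<Sum>b\<in>{0,1}. p b c y' z))"

definition win_prob :: "(nat \<Rightarrow> nat \<Rightarrow> nat \<Rightarrow> nat \<Rightarrow> real) \<Rightarrow> nat \<Rightarrow> nat \<Rightarrow> real" where
  "win_prob p y z = (\<Sum>b\<in>{0,1}. \<Sum>c\<in>{0,1}. if (b + c) mod 2 = y * z then p b c y z else 0)"

text \<open>Marginal p(b=0|y=0) = \<Sum>_c p(0c|0z); taken at z = 0 (independent of z by nonsignalling).\<close>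
definition marg_b0_y0 :: "(nat \<Rightarrow> nat \<Rightarrow> nat \<Rightarrow> nat \<Rightarrow> real) \<Rightarrow> real" where
  "marg_b0_y0 p = (\<Sum>c\<in>{0,1}. p 0 c 0 0)"

end

theory Submission
  imports Defs
begin

theorem lemma1:
  fixes p :: "nat \<Rightarrow> nat \<Rightarrow> nat \<Rightarrow> nat \<Rightarrow> real"
  assumes "is_cond_prob p"
    and "nonsignalling p"
  shows "(1/4) * (\<Sum>y\<in>{0,1}. \<Sum>z\<in>{0,1}. win_prob p y z) \<le> 5/4 - (1/2) * marg_b0_y0 p"
proof -
  have P: "p 1 1 1 1 \<ge> 0" "p 1 0 0 0 \<ge> 0" "p 1 0 0 1 \<ge> 0" "p 0 1 1 0 \<ge> 0"
    "p 0 0 0 0 + p 0 1 0 0 + p 1 0 0 0 + p 1 1 0 0 = 1"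
    "p 0 0 0 1 + p 0 1 0 1 + p 1 0 0 1 + p 1 1 0 1 = 1"
    "p 0 0 1 0 + p 0 1 1 0 + p 1 0 1 0 + p 1 1 1 0 = 1"
    "p 0 0 1 1 + p 0 1 1 1 + p 1 0 1 1 + p 1 1 1 1 = 1"
    using assms(1) unfolding is_cond_prob_def by simp_all
  have N1: "\<forall>b\<in>{0,1}. \<forall>y\<in>{0,1}. \<forall>z\<in>{0,1}. \<forall>z'\<in>{0,1}.
        (\<Sum>c\<in>{0,1}. p b c y z) = (\<Sum>c\<in>{0,1}. p b c y z')"
   and N2: "\<forall>c\<in>{0,1}. \<forall>z\<in>{0,1}. \<forall>y\<in>{0,1}. \<forall>y'\<in>{0,1}.
        (\<Sum>b\<in>{0,1}. p b c y z) = (\<Sum>b\<in>{0,1}. p b c y' z)"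
    using assms(2) unfolding nonsignalling_def by (rule conjunct1, rule conjunct2)
  have Na: "p 0 0 1 0 + p 0 1 1 0 = p 0 0 1 1 + p 0 1 1 1"
    using N1[rule_format, of 0 1 0 1] by simp
  have Nb: "p 0 0 0 0 + p 0 1 0 0 = p 0 0 0 1 + p 0 1 0 1"
    using N1[rule_format, of 0 0 0 1] by simp
  have Nc: "p 0 0 0 1 + p 1 0 0 1 = p 0 0 1 1 + p 1 0 1 1"
    using N2[rule_format, of 0 1 0 1] by simp
  have Nd: "p 0 0 0 0 + p 1 0 0 0 = p 0 0 1 0 + p 1 0 1 0"
    using N2[rule_format, of 0 0 0 1] by simp
  have W: "(\<Sum>y\<in>{0,1}. \<Sum>z\<in>{0,1}. win_prob p y z) = p 0 0 0 0 + p 1 1 0 0 + p 0 0 0 1 + p 1 1 0 1 + p 0 0 1 0 + p 1 1 1 0 + p 0 1 1 1 + p 1 0 1 1"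
    by (simp add: win_prob_def)
  have M: "marg_b0_y0 p = p 0 0 0 0 + p 0 1 0 0" by (simp add: marg_b0_y0_def)
  have "p 0 0 0 0 + p 1 1 0 0 + p 0 0 0 1 + p 1 1 0 1 + p 0 0 1 0 + p 1 1 1 0 + p 0 1 1 1 + p 1 0 1 1
    \<le> 5 - 2 * (p 0 0 0 0 + p 0 1 0 0)"
    using P Na Nb Nc Nd by simp
  then show ?thesis unfolding W M by (simp add: field_simps)
qed

end
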